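(* Let $V$ be a vertex algebra and $a\in V$. Then: (1) $a_0a_0\cdots a_0a\in C_2(V)$ (for any positive number of factors $a_0$); (2) if $n_1,\dots,n_t\in\{0,-1\}$ and the number $k$ of indices $i$ with $n_i=-1$ satisfies $k<t$, then $a_{n_1}a_{n_2}\cdots a_{n_t}a\equiv \underbrace{a_{-1}\cdots a_{-1}}_{k}\underbrace{a_0\cdots a_0}_{t-k}a\equiv 0 \pmod{C_2(V)}$.
   Context: A vertex algebra $(V,Y,\mathbf{1})$ is over $\mathbb{C}$; for $u\in V$ write $Y(u,z)=\sum_{n\in\mathbb{Z}}u_nz^{-n-1}$ with $u_n\in\operatorname{End}V$. Iterated products are nested to the right: $a_{n_1}a_{n_2}\cdots a_{n_t}a=a_{n_1}(a_{n_2}(\cdots(a_{n_t}a)))$. $C_2(V)=\operatorname{span}_{\mathbb{C}}\{u_{-2}v: u,v\in V\}$. *)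

theory Defs
  imports Complex_Main
begin

text \<open>Y u n v denotes the component u_n v, i.e.
  Y(u,z) v = sum_n (Y u n v) z^(-n-1).  The axioms are: bilinearity, truncation,
  vacuum and creation axioms, and the Jacobi identity written in components
  (Borcherds identity).  The sums in the Borcherds identity are finite by truncation;
  fsum sums over the (finite) support.\<close>

definition fsum :: "(nat \<Rightarrow> 'v::ab_group_add) \<Rightarrow> 'v" where
  "fsum f = sum f {i. f i \<noteq> 0}"

definition vertex_algebra ::
  "(complex \<Rightarrow> 'v::ab_group_add \<Rightarrow> 'v) \<Rightarrow> ('v \<Rightarrow> int \<Rightarrow> 'v \<Rightarrow> 'v) \<Rightarrow> 'v \<Rightarrow> bool" where
  "vertex_algebra scale Y vac \<longleftrightarrow>
     module scale \<and>
     (\<forall>u u' n v. Y (u + u') n v = Y u n v + Y u' n v) \<and>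
     (\<forall>c u n v. Y (scale c u) n v = scale c (Y u n v)) \<and>
     (\<forall>u n v v'. Y u n (v + v') = Y u n v + Y u n v') \<and>
     (\<forall>c u n v. Y u n (scale c v) = scale c (Y u n v)) \<and>
     (\<forall>u v. \<exists>N. \<forall>n\<ge>N. Y u n v = 0) \<and>
     (\<forall>n v. Y vac n v = (if n = -1 then v else 0)) \<and>
     (\<forall>u n. n \<ge> 0 \<longrightarrow> Y u n vac = 0) \<and>
     (\<forall>u. Y u (-1) vac = u) \<and>
     (\<forall>u v w p q r.
        fsum (\<lambda>i. scale (of_int p gchoose i) (Y (Y u (r + int i) v) (p + q - int i) w)) =
        fsum (\<lambda>i. scale ((-1) ^ i * (of_int r gchoose i))
                    (Y u (p + r - int i) (Y v (q + int i) w)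
                     - scale ((-1) powi r) (Y v (q + r - int i) (Y u (p + int i) w)))))"

definition C2 :: "(complex \<Rightarrow> 'v::ab_group_add \<Rightarrow> 'v) \<Rightarrow> ('v \<Rightarrow> int \<Rightarrow> 'v \<Rightarrow> 'v) \<Rightarrow> 'v set" where
  "C2 scale Y = module.span scale {Y u (-2) v | u v. True}"

definition iter_prod :: "('v \<Rightarrow> int \<Rightarrow> 'v \<Rightarrow> 'v) \<Rightarrow> 'v \<Rightarrow> int list \<Rightarrow> 'v" where
  "iter_prod Y a ns = foldr (\<lambda>n x. Y a n x) ns a"

end

theory Submission
  imports Defs
begin

lemma fsum_eq: "finite S \<Longrightarrow> (\<And>i. i \<notin> S \<Longrightarrow> f i = 0) \<Longrightarrow> fsum f = sum f S"
  unfolding fsum_def by (rule sum.mono_neutral_left) auto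

lemma fsum_single: "(\<And>i. i \<noteq> j \<Longrightarrow> f i = 0) \<Longrightarrow> fsum f = f j"
  using fsum_eq[of "{j}" f] by auto

lemma gch_m2: "(-1::complex) ^ k * (of_int (-2) gchoose k) = of_nat (k+1)"
proof -
  have "(of_int (-2)::complex) gchoose k = (-1)^k * ((of_nat (Suc k)) gchoose k)"
    by (subst gbinomial_negated_upper) (simp add: algebra_simps)
  also have "(of_nat (Suc k) :: complex) gchoose k = of_nat (Suc k choose k)"
    by (simp only: binomial_gbinomial)
  finally show ?thesis by simp
qed

locale VA =
  fixes scale :: "complex \<Rightarrow> 'v::ab_group_add \<Rightarrow> 'v"
    and Y :: "'v \<Rightarrow> int \<Rightarrow> 'v \<Rightarrow> 'v" and vac :: 'v
  assumes va: "vertex_algebra scale Y vac"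
begin

sublocale M: module scale using va unfolding vertex_algebra_def by blast

lemma Yadd1: "Y (u + u') n v = Y u n v + Y u' n v" by (rule va[unfolded vertex_algebra_def, THEN conjunct2, THEN conjunct1, rule_format])
lemma Yscale1: "Y (scale c u) n v = scale c (Y u n v)" by (rule va[unfolded vertex_algebra_def, THEN conjunct2, THEN conjunct2, THEN conjunct1, rule_format])
lemma Yadd2: "Y u n (v + v') = Y u n v + Y u n v'" by (rule va[unfolded vertex_algebra_def, THEN conjunct2, THEN conjunct2, THEN conjunct2, THEN conjunct1, rule_format])
lemma Yscale2: "Y u n (scale c v) = scale c (Y u n v)" by (rule va[unfolded vertex_algebra_def, THEN conjunct2, THEN conjunct2, THEN conjunct2, THEN conjunct2, THEN conjunct1, rule_format])
lemma trunc: "\<exists>N. \<forall>n\<ge>N. Y u n v = 0" by (rule va[unfolded vertex_algebra_def, THEN conjunct2, THEN conjunct2, THEN conjunct2, THEN conjunct2, THEN conjunct2, THEN conjunct1, rule_format])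
lemma vacY: "Y vac n v = (if n = -1 then v else 0)" by (rule va[unfolded vertex_algebra_def, THEN conjunct2, THEN conjunct2, THEN conjunct2, THEN conjunct2, THEN conjunct2, THEN conjunct2, THEN conjunct1, rule_format])
lemma Yvac: "n \<ge> 0 \<Longrightarrow> Y u n vac = 0" by (rule va[unfolded vertex_algebra_def, THEN conjunct2, THEN conjunct2, THEN conjunct2, THEN conjunct2, THEN conjunct2, THEN conjunct2, THEN conjunct2, THEN conjunct1, rule_format])
lemma create: "Y u (-1) vac = u" by (rule va[unfolded vertex_algebra_def, THEN conjunct2, THEN conjunct2, THEN conjunct2, THEN conjunct2, THEN conjunct2, THEN conjunct2, THEN conjunct2, THEN conjunct2, THEN conjunct1, rule_format])
lemma borch: "fsum (\<lambda>i. scale (of_int p gchoose i) (Y (Y u (r + int i) v) (p + q - int i) w)) =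
        fsum (\<lambda>i. scale ((-1) ^ i * (of_int r gchoose i))
                    (Y u (p + r - int i) (Y v (q + int i) w)
                     - scale ((-1) powi r) (Y v (q + r - int i) (Y u (p + int i) w))))"
  by (rule va[unfolded vertex_algebra_def, THEN conjunct2, THEN conjunct2, THEN conjunct2, THEN conjunct2, THEN conjunct2, THEN conjunct2, THEN conjunct2, THEN conjunct2, THEN conjunct2, rule_format])

lemma Y01[simp]: "Y 0 n v = 0" using Yadd1[of 0 0 n v] by simp
lemma Y02[simp]: "Y u n 0 = 0" using Yadd2[of u n 0 0] by simp

abbreviation "G \<equiv> {Y u (-2) v | u v. True}"

lemma C2eq: "C2 scale Y = M.span G" unfolding C2_def by simp

lemma C2_fsum: "(\<And>i. f i \<in> M.span G) \<Longrightarrow> fsum f \<in> M.span G"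
  unfolding fsum_def by (rule M.span_sum) auto

lemma Dform: "Y (Y u (-2) vac) (- int n) w = scale (of_nat n) (Y u (- int n - 1) w)"
  if "n \<ge> 1" for n :: nat
proof -
  have L: "fsum (\<lambda>i. scale (of_int 0 gchoose i) (Y (Y u (-2 + int i) vac) (0 + (- int n) - int i) w))
     = Y (Y u (-2) vac) (- int n) w"
    by (subst fsum_single[where j=0]) (auto simp: gbinomial_0_left)
  have R: "fsum (\<lambda>i. scale ((-1) ^ i * (of_int (-2) gchoose i))
                    (Y u (0 + (-2) - int i) (Y vac ((- int n) + int i) w)
                     - scale ((-1) powi (-2)) (Y vac ((- int n) + (-2) - int i) (Y u (0 + int i) w))))
     = scale (of_nat n) (Y u (- int n - 1) w)"
  proof (subst fsum_single[where j="n - 1"])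
    fix i assume "i \<noteq> n - 1"
    then show "scale ((-1) ^ i * (of_int (-2) gchoose i))
                    (Y u (0 + (-2) - int i) (Y vac ((- int n) + int i) w)
                     - scale ((-1) powi (-2)) (Y vac ((- int n) + (-2) - int i) (Y u (0 + int i) w))) = 0"
      using that by (auto simp: vacY)
  next
    show "scale ((-1) ^ (n-1) * (of_int (-2) gchoose (n-1)))
                    (Y u (0 + (-2) - int (n-1)) (Y vac ((- int n) + int (n-1)) w)
                     - scale ((-1) powi (-2)) (Y vac ((- int n) + (-2) - int (n-1)) (Y u (0 + int (n-1)) w)))
          = scale (of_nat n) (Y u (- int n - 1) w)"
    proof -
      have c: "(-1::complex)^(n-1) * ((-2) gchoose (n-1)) = of_nat n" using gch_m2[of "n-1"] that by simp
      have e: "(-1 - int n) = (- int n - 1)" by simp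
      show ?thesis using that c by (simp add: vacY algebra_simps e)
    qed
  qed
  show ?thesis using borch[of 0 u "-2" vac "- int n" w] L R by simp
qed


lemma L1nat: "n \<ge> 2 \<Longrightarrow> Y u (- int n) v \<in> M.span G" for n :: nat
proof (induction n arbitrary: u v rule: nat_induct_at_least)
  case base
  then show ?case by (intro M.span_base) auto
next
  case (Suc n)
  have "Y (Y u (-2) vac) (- int n) v = scale (of_nat n) (Y u (- int n - 1) v)"
    using Dform[of n u v] Suc by simp
  then have "scale (1 / of_nat n) (Y (Y u (-2) vac) (- int n) v) = Y u (- int n - 1) v"
    using Suc by simp
  moreover have "Y (Y u (-2) vac) (- int n) v \<in> M.span G" using Suc by blast
  ultimately have "Y u (- int n - 1) v \<in> M.span G" by (metis M.span_scale)
  moreover have e: "- int (Suc n) = - int n - 1" by simp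
  ultimately show ?case by (subst e)
qed

lemma L1: "m \<le> -2 \<Longrightarrow> Y u m v \<in> M.span G"
  using L1nat[of "nat (-m)" u v] by simp

lemma comm: "fsum (\<lambda>i. scale (of_int p gchoose i) (Y (Y u (int i) v) (p + q - int i) w))
   = Y u p (Y v q w) - Y v q (Y u p w)"
proof -
  have "fsum (\<lambda>i. scale ((-1) ^ i * (of_int 0 gchoose i))
                    (Y u (p + 0 - int i) (Y v (q + int i) w)
                     - scale ((-1) powi 0) (Y v (q + 0 - int i) (Y u (p + int i) w))))
        = Y u p (Y v q w) - Y v q (Y u p w)"
    by (subst fsum_single[where j=0]) (auto simp: gbinomial_0_left)
  then show ?thesis using borch[of p u 0 v q w] by simp
qed

lemma comm0: "Y (Y u 0 v) q w = Y u 0 (Y v q w) - Y v q (Y u 0 w)"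
proof -
  have "fsum (\<lambda>i. scale (of_int 0 gchoose i) (Y (Y u (int i) v) (0 + q - int i) w)) = Y (Y u 0 v) q w"
    by (subst fsum_single[where j=0]) (auto simp: gbinomial_0_left)
  then show ?thesis using comm[of 0 u v q w] by simp
qed

lemma left_gen: "p \<le> 0 \<Longrightarrow> Y u p (Y x (-2) y) \<in> M.span G"
proof -
  assume p: "p \<le> 0"
  have "fsum (\<lambda>i. scale (of_int p gchoose i) (Y (Y u (int i) x) (p + -2 - int i) y)) \<in> M.span G"
    using p by (intro C2_fsum M.span_scale L1) simp
  then have "Y u p (Y x (-2) y) - Y x (-2) (Y u p y) \<in> M.span G" by (simp only: comm)
  moreover have "Y x (-2) (Y u p y) \<in> M.span G" by (intro M.span_base) auto
  ultimately show ?thesis by (metis M.span_add diff_add_cancel)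
qed

lemma left_ideal: "p \<le> 0 \<Longrightarrow> c \<in> M.span G \<Longrightarrow> Y u p c \<in> M.span G"
proof -
  assume p: "p \<le> 0" and c: "c \<in> M.span G"
  from c show ?thesis
  proof (induction rule: M.span_induct_alt)
    case base then show ?case by (simp add: M.span_zero)
  next
    case (step d x y)
    then show ?case using left_gen[OF p]
      by (auto simp: Yadd2 Yscale2 intro!: M.span_add M.span_scale)
  qed
qed

lemma right_gen: "Y (Y x (-2) y) (-1) w \<in> M.span G"
proof -
  have L: "fsum (\<lambda>i. scale (of_int 0 gchoose i) (Y (Y x (-2 + int i) y) (0 + -1 - int i) w))
     = Y (Y x (-2) y) (-1) w"
    by (subst fsum_single[where j=0]) (auto simp: gbinomial_0_left)
  have "fsum (\<lambda>i. scale ((-1) ^ i * (of_int (-2) gchoose i))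
                    (Y x (0 + -2 - int i) (Y y (-1 + int i) w)
                     - scale ((-1) powi (-2)) (Y y (-1 + -2 - int i) (Y x (0 + int i) w)))) \<in> M.span G"
    by (intro C2_fsum M.span_scale M.span_diff L1) auto
  then show ?thesis using borch[of 0 x "-2" y "-1" w] L by simp
qed

lemma right_ideal: "c \<in> M.span G \<Longrightarrow> Y c (-1) w \<in> M.span G"
proof (induction rule: M.span_induct_alt)
  case base then show ?case by (simp add: M.span_zero)
next
  case (step d x y)
  then show ?case using right_gen
    by (auto simp: Yadd1 Yscale1 intro!: M.span_add M.span_scale)
qed

lemma fsum_split0:
  assumes "finite {i. f i \<noteq> 0}"
  shows "fsum f = f 0 + fsum (f(0:=0))"
proof -
  let ?S = "insert 0 {i. f i \<noteq> 0}"
  have "fsum f = sum f ?S" using assms by (intro fsum_eq) auto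
  also have "\<dots> = f 0 + sum f (?S - {0})" using assms by (simp add: sum.insert_remove)
  also have "sum f (?S - {0}) = sum (f(0:=0)) ?S"
  proof -
    have "sum (f(0:=0)) ?S = sum (f(0:=0)) ({i. f i \<noteq> 0} - {0})" using assms by (simp add: sum.insert_remove)
    also have "\<dots> = sum f ({i. f i \<noteq> 0} - {0})" by (rule sum.cong) auto
    finally show ?thesis by simp
  qed
  also have "sum (f(0:=0)) ?S = fsum (f(0:=0))" using assms by (intro fsum_eq[symmetric]) auto
  finally show ?thesis .
qed

lemma skew0: "Y u 0 v + Y v 0 u \<in> M.span G"
proof -
  define f where "f = (\<lambda>i. scale (of_int (-1) gchoose i) (Y (Y u (0 + int i) v) (-1 + 0 - int i) vac))"
  obtain N where N: "\<forall>n\<ge>N. Y u n v = 0" using trunc by blast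
  have fin: "finite {i. f i \<noteq> 0}"
  proof (rule finite_subset[of _ "{..<nat N}"])
    show "{i. f i \<noteq> 0} \<subseteq> {..<nat N}"
    proof
      fix i assume "i \<in> {i. f i \<noteq> 0}"
      then have "f i \<noteq> 0" by simp
      then have "\<not> (int i \<ge> N)" using N unfolding f_def by auto
      then show "i \<in> {..<nat N}" by simp
    qed
  qed simp
  have f0: "f 0 = Y u 0 v" unfolding f_def by (simp add: create)
  have rest: "fsum (f(0:=0)) \<in> M.span G"
  proof (intro C2_fsum)
    fix i
    show "(f(0:=0)) i \<in> M.span G"
    proof (cases "i = 0")
      case True then show ?thesis by (simp add: M.span_zero)
    next
      case False
      then have "Y (Y u (0 + int i) v) (-1 + 0 - int i) vac \<in> M.span G" by (intro L1) simp
      then show ?thesis using False unfolding f_def by (simp add: M.span_scale)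
    qed
  qed
  have R: "fsum (\<lambda>i. scale ((-1) ^ i * (of_int 0 gchoose i))
                    (Y u (-1 + 0 - int i) (Y v (0 + int i) vac)
                     - scale ((-1) powi 0) (Y v (0 + 0 - int i) (Y u (-1 + int i) vac)))) = - Y v 0 u"
    by (subst fsum_single[where j=0]) (auto simp: gbinomial_0_left Yvac create)
  have "fsum f = - Y v 0 u" using borch[of "-1" u 0 v 0 vac] R unfolding f_def by simp
  then have "Y u 0 v + fsum (f(0:=0)) = - Y v 0 u" using fsum_split0[OF fin] f0 by simp
  then have "Y u 0 v + Y v 0 u = - fsum (f(0:=0))" by (simp add: algebra_simps eq_neg_iff_add_eq_0)
  then show ?thesis using rest by (simp add: M.span_neg)
qed

lemma a0a: "Y a 0 a \<in> M.span G"
proof -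
  have "scale (1/2) (Y a 0 a + Y a 0 a) \<in> M.span G" using skew0[of a a] by (rule M.span_scale)
  moreover have "scale (1/2) (Y a 0 a + Y a 0 a) = Y a 0 a"
  proof -
    have "Y a 0 a + Y a 0 a = scale 2 (Y a 0 a)"
      by (metis M.scale_left_distrib M.scale_one one_add_one)
    then show ?thesis by simp
  qed
  ultimately show ?thesis by simp
qed


lemma P1: "m \<ge> 1 \<Longrightarrow> foldr (\<lambda>n x. Y a n x) (replicate m 0) a \<in> M.span G"
proof (induction m rule: nat_induct_at_least)
  case base then show ?case using a0a by simp
next
  case (Suc m) then show ?case using left_ideal[of 0 "foldr (\<lambda>n x. Y a n x) (replicate m 0) a" a] by simp
qed

lemma P0: "Y a 0 (foldr (\<lambda>n x. Y a n x) (replicate s (-1)) a) \<in> M.span G"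
proof (induction s)
  case 0 then show ?case using a0a by simp
next
  case (Suc s)
  define x where "x = foldr (\<lambda>n x. Y a n x) (replicate s (-1)) a"
  have "Y a 0 (Y a (-1) x) = Y (Y a 0 a) (-1) x + Y a (-1) (Y a 0 x)"
    using comm0[of a a "-1" x] by (simp add: algebra_simps)
  moreover have "Y (Y a 0 a) (-1) x \<in> M.span G" using a0a by (rule right_ideal)
  moreover have "Y a (-1) (Y a 0 x) \<in> M.span G" using Suc.IH left_ideal[of "-1" "Y a 0 x" a] unfolding x_def by simp
  ultimately have "Y a 0 (Y a (-1) x) \<in> M.span G" by (simp add: M.span_add)
  then show ?case unfolding x_def by (simp del: foldr_replicate)
qed

lemma P2: "set ns \<subseteq> {0, -1} \<Longrightarrow> 0 \<in> set ns \<Longrightarrow> foldr (\<lambda>n x. Y a n x) ns a \<in> M.span G"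
proof (induction ns)
  case Nil then show ?case by simp
next
  case (Cons n ns)
  show ?case
  proof (cases "0 \<in> set ns")
    case True
    have "n \<le> 0" using Cons by auto
    moreover have "foldr (\<lambda>n x. Y a n x) ns a \<in> M.span G" using Cons True by auto
    ultimately show ?thesis using left_ideal by simp
  next
    case False
    then have n: "n = 0" using Cons by auto
    have "\<forall>x\<in>set ns. x = -1" using Cons False by auto
    then have "replicate (length ns) (-1) = ns" by (rule replicate_length_same)
    then show ?thesis using P0[where s="length ns"] n by simp
  qed
qed

lemma P3: "c \<in> M.span G \<Longrightarrow> foldr (\<lambda>n x. Y a n x) (replicate k (-1)) c \<in> M.span G"
proof (induction k)
  case 0 then show ?case by simp
next
  case (Suc k) then show ?case using left_ideal[of "-1" "foldr (\<lambda>n x. Y a n x) (replicate k (-1)) c" a] by simp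
qed

end

theorem mainTheorem2:
  fixes scale :: "complex \<Rightarrow> 'v::ab_group_add \<Rightarrow> 'v"
    and Y :: "'v \<Rightarrow> int \<Rightarrow> 'v \<Rightarrow> 'v" and vac :: 'v and a :: 'v
  assumes "vertex_algebra scale Y vac"
  shows "(\<forall>m::nat. m \<ge> 1 \<longrightarrow> iter_prod Y a (replicate m 0) \<in> C2 scale Y) \<and>
         (\<forall>ns::int list. set ns \<subseteq> {0, -1} \<longrightarrow>
            length (filter (\<lambda>n. n = -1) ns) < length ns \<longrightarrow>
            (let k = length (filter (\<lambda>n. n = -1) ns);
                 b = iter_prod Y a (replicate k (-1) @ replicate (length ns - k) 0)
             in iter_prod Y a ns - b \<in> C2 scale Y \<and> b \<in> C2 scale Y))"
proof -
  interpret VA scale Y vac by (rule VA.intro) (fact assms)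
  have part1: "\<forall>m::nat. m \<ge> 1 \<longrightarrow> iter_prod Y a (replicate m 0) \<in> C2 scale Y"
    unfolding iter_prod_def C2eq using P1 by blast
  have part2: "iter_prod Y a ns - b \<in> C2 scale Y \<and> b \<in> C2 scale Y"
    if ns: "set ns \<subseteq> {0, -1}" and lt: "length (filter (\<lambda>n. n = -1) ns) < length ns"
      and b: "b = iter_prod Y a (replicate (length (filter (\<lambda>n. n = -1) ns)) (-1)
                 @ replicate (length ns - length (filter (\<lambda>n. n = -1) ns)) 0)" for ns b
  proof -
    let ?k = "length (filter (\<lambda>n. n = -1) ns)"
    have z: "0 \<in> set ns"
    proof (rule ccontr)
      assume "0 \<notin> set ns"
      then have "\<forall>x\<in>set ns. x = -1" using ns by auto
      then have "filter (\<lambda>n. n = -1) ns = ns" by simp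
      then show False using lt by simp
    qed
    have bi: "b \<in> M.span G"
      unfolding b iter_prod_def foldr_append
      using lt by (intro P3 P1) simp
    have "iter_prod Y a ns \<in> M.span G" unfolding iter_prod_def using P2 ns z by blast
    then show ?thesis using bi by (simp add: C2eq M.span_diff)
  qed
  show ?thesis using part1 part2 by (simp add: Let_def)
qed

end
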